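(* Let $\mathfrak A=\{(a,\alpha)\in\mathbb R^2:-1\le\alpha<a\le1\}$ and $\Omega=\{(\lambda,\mu)\in\mathbb R^2:\lambda\ge1,\ \mu\ge1\}$. Consider the system $$ \begin{cases} 2\,(a+\alpha)(3-a\alpha-a-\alpha)(3-a\alpha+a+\alpha)+(\lambda-\mu)(a-\alpha)^3=0,\\ (\lambda+\mu)^2(a-\alpha)^6=4\,(3+a\alpha)^3(1-a\alpha)(2+a+\alpha)(2-a-\alpha). \end{cases} $$ This system defines a one-to-one correspondence between $\mathfrak A$ and $\Omega$ (for each $(a,\alpha)\in\mathfrak A$ there is exactly one $(\lambda,\mu)\in\Omega$ solving it together with $(a,\alpha)$, and this assignment is a bijection $\mathfrak A\to\Omega$). Moreover, this bijection maps $\{(a,\alpha):-1<\alpha<a<1\}$ onto the interior $\{\lambda>1,\mu>1\}$ of $\Omega$, the side $\{a=1\}$ of $\mathfrak A$ onto the ray $\{\lambda=1\}\subset\Omega$, the side $\{\alpha=-1\}$ onto the ray $\{\mu=1\}\subset\Omega$, and the vertex $(a,\alpha)=(1,-1)$ onto the point $(\lambda,\mu)=(1,1)$. *)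

theory Defs
  imports Complex_Main
begin

definition frakA :: "(real \<times> real) set" where
  "frakA = {(a, al). -1 \<le> al \<and> al < a \<and> a \<le> 1}"

definition Omega :: "(real \<times> real) set" where
  "Omega = {(l, m). l \<ge> 1 \<and> m \<ge> 1}"

definition sys :: "real \<Rightarrow> real \<Rightarrow> real \<Rightarrow> real \<Rightarrow> bool" where
  "sys a al l m \<longleftrightarrow>
     2 * (a + al) * (3 - a*al - a - al) * (3 - a*al + a + al) + (l - m) * (a - al)^3 = 0 \<and>
     (l + m)^2 * (a - al)^6 = 4 * (3 + a*al)^3 * (1 - a*al) * (2 + a + al) * (2 - a - al)"

definition corr :: "real \<times> real \<Rightarrow> real \<times> real" where
  "corr p = (THE q. q \<in> Omega \<and> sys (fst p) (snd p) (fst q) (snd q))"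

end

theory Submission
  imports Defs "HOL-Analysis.Analysis"
begin



definition WW :: "real \<Rightarrow> real \<Rightarrow> real" where
  "WW a b = (3+a*b)^3*(1-a*b)*(2+a+b)*(2-a-b)"
definition WD :: "real \<Rightarrow> real \<Rightarrow> real" where
  "WD a b = 3*(3+a*b)^2*b*(1-a*b)*(2+a+b)*(2-a-b) - (3+a*b)^3*b*(2+a+b)*(2-a-b)
     + (3+a*b)^3*(1-a*b)*(2-a-b) - (3+a*b)^3*(1-a*b)*(2+a+b)"
definition NN :: "real \<Rightarrow> real \<Rightarrow> real" where
  "NN a b = (a+b)*(3-a*b-a-b)*(3-a*b+a+b)"
definition ND :: "real \<Rightarrow> real \<Rightarrow> real" where
  "ND a b = (3-a*b-a-b)*(3-a*b+a+b) + (a+b)*(-b-1)*(3-a*b+a+b) + (a+b)*(3-a*b-a-b)*(1-b)"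
definition GG :: "real \<Rightarrow> real \<Rightarrow> real" where
  "GG a b = (3+a*b)*(1-a*b)*(4*(3-a*b)^2 - 12*(a+b)^2 + 2*(a+b)^4) + 2*b*(a+b)*(4-(a+b)^2)*(-9+18*(a*b)-5*(a*b)^2-(a*b)*(a+b)^2)"
definition TT :: "real \<Rightarrow> real \<Rightarrow> real" where
  "TT a b = WW a b / (a-b)^6"
definition RR :: "real \<Rightarrow> real \<Rightarrow> real" where
  "RR a b = NN a b / sqrt (WW a b)"
definition LL :: "real \<Rightarrow> real \<Rightarrow> real" where
  "LL a b = sqrt (TT a b) * (1 - RR a b)"
definition MM :: "real \<Rightarrow> real \<Rightarrow> real" where
  "MM a b = sqrt (TT a b) * (1 + RR a b)"

lemma G_id:
  fixes a b :: real
  defines "x \<equiv> 1 + b" and "y \<equiv> 1 - a" and "z \<equiv> a - b"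
  shows "GG a b = 1*z^8 + 5*y*z^7 + 9*y^2*z^6 + 7*y^3*z^5 + 2*y^4*z^4 + 9*x*z^7 + 48*x*y*z^6 + 95*x*y^2*z^5 + 82*x*y^3*z^4 + 26*x*y^4*z^3 + 26*x^2*z^6 + 150*x^2*y*z^5 + 325*x^2*y^2*z^4 + 309*x^2*y^3*z^3 + 108*x^2*y^4*z^2 + 30*x^3*z^5 + 188*x^3*y*z^4 + 447*x^3*y^2*z^3 + 468*x^3*y^3*z^2 + 180*x^3*y^4*z + 12*x^4*z^4 + 82*x^4*y*z^3 + 216*x^4*y^2*z^2 + 252*x^4*y^3*z + 108*x^4*y^4"
  unfolding x_def y_def z_def GG_def by algebra

lemma T_id:
  fixes a b :: real
  defines "x \<equiv> 1 + b" and "y \<equiv> 1 - a" and "z \<equiv> a - b"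
  shows "6*WW a b - WD a b*(a-b) = (1/2)*z^10 + (11/2)*y*z^9 + 26*y^2*z^8 + 69*y^3*z^7 + (225/2)*y^4*z^6 + (231/2)*y^5*z^5 + 73*y^6*z^4 + 26*y^7*z^3 + 4*y^8*z^2 + (11/2)*x*z^9 + 53*x*y*z^8 + 220*x*y^2*z^7 + 516*x*y^3*z^6 + (1503/2)*x*y^4*z^5 + 699*x*y^5*z^4 + 407*x*y^6*z^3 + 136*x*y^7*z^2 + 20*x*y^8*z + (53/2)*x^2*z^8 + (445/2)*x^2*y*z^7 + 801*x^2*y^2*z^6 + 1617*x^2*y^3*z^5 + (4005/2)*x^2*y^4*z^4 + (3117/2)*x^2*y^5*z^3 + 746*x^2*y^6*z^2 + 202*x^2*y^7*z + 24*x^2*y^8 + (147/2)*x^3*z^7 + 534*x^3*y*z^6 + 1641*x^3*y^2*z^5 + 2770*x^3*y^3*z^4 + (5551/2)*x^3*y^4*z^3 + 1648*x^3*y^5*z^2 + 534*x^3*y^6*z + 72*x^3*y^7 + 129*x^4*z^6 + 804*x^4*y*z^5 + (4131/2)*x^4*y^2*z^4 + (5605/2)*x^4*y^3*z^3 + 2122*x^4*y^4*z^2 + 854*x^4*y^5*z + 144*x^4*y^6 + 147*x^5*z^5 + 780*x^5*y*z^4 + (3255/2)*x^5*y^2*z^3 + 1676*x^5*y^3*z^2 + 850*x^5*y^4*z + 168*x^5*y^5 + 106*x^6*z^4 + 479*x^6*y*z^3 + 778*x^6*y^2*z^2 + 546*x^6*y^3*z + 144*x^6*y^4 + 44*x^7*z^3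 + 172*x^7*y*z^2 + 206*x^7*y^2*z + 72*x^7*y^3 + 8*x^8*z^2 + 28*x^8*y*z + 24*x^8*y^2"
  unfolding x_def y_def z_def WW_def WD_def by algebra

lemma F_id: "2*ND a b*WW a b - NN a b*WD a b = 2*(3+a*b)^2*GG a b"
  unfolding ND_def WW_def NN_def WD_def GG_def by algebra

lemma G_pos:
  assumes "-1 \<le> b" "b < a" "a \<le> 1"
  shows "GG a b > 0"
proof -
  define x y z where "x = 1 + b" and "y = 1 - a" and "z = a - b"
  have x: "x \<ge> 0" and y: "y \<ge> 0" and z: "z > 0" using assms by (auto simp: x_def y_def z_def)
  have "GG a b = 1*z^8 + 5*y*z^7 + 9*y^2*z^6 + 7*y^3*z^5 + 2*y^4*z^4 + 9*x*z^7 + 48*x*y*z^6 + 95*x*y^2*z^5 + 82*x*y^3*z^4 + 26*x*y^4*z^3 + 26*x^2*z^6 + 150*x^2*y*z^5 + 325*x^2*y^2*z^4 + 309*x^2*y^3*z^3 + 108*x^2*y^4*z^2 + 30*x^3*z^5 + 188*x^3*y*z^4 + 447*x^3*y^2*z^3 + 468*x^3*y^3*z^2 + 180*x^3*y^4*z + 12*x^4*z^4 + 82*x^4*y*z^3 + 216*x^4*y^2*z^2 + 252*x^4*y^3*z + 108*x^4*y^4"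
    unfolding x_def y_def z_def by (rule G_id)
  also have "\<dots> > 0"
    using x y z by (intro add_pos_nonneg mult_nonneg_nonneg zero_le_power zero_less_power; simp)
  finally show ?thesis .
qed

lemma T_pos:
  assumes "-1 \<le> b" "b < a" "a \<le> 1"
  shows "6*WW a b - WD a b*(a-b) > 0"
proof -
  define x y z where "x = 1 + b" and "y = 1 - a" and "z = a - b"
  have x: "x \<ge> 0" and y: "y \<ge> 0" and z: "z > 0" using assms by (auto simp: x_def y_def z_def)
  have "6*WW a b - WD a b*(a-b) = (1/2)*z^10 + (11/2)*y*z^9 + 26*y^2*z^8 + 69*y^3*z^7 + (225/2)*y^4*z^6 + (231/2)*y^5*z^5 + 73*y^6*z^4 + 26*y^7*z^3 + 4*y^8*z^2 + (11/2)*x*z^9 + 53*x*y*z^8 + 220*x*y^2*z^7 + 516*x*y^3*z^6 + (1503/2)*x*y^4*z^5 + 699*x*y^5*z^4 + 407*x*y^6*z^3 + 136*x*y^7*z^2 + 20*x*y^8*z + (53/2)*x^2*z^8 + (445/2)*x^2*y*z^7 + 801*x^2*y^2*z^6 + 1617*x^2*y^3*z^5 + (4005/2)*x^2*y^4*z^4 + (3117/2)*x^2*y^5*z^3 + 746*x^2*y^6*z^2 + 202*x^2*y^7*z + 24*x^2*y^8 + (147/2)*x^3*z^7 + 534*x^3*y*z^6 + 1641*x^3*y^2*z^5 + 2770*x^3*y^3*z^4 + (5551/2)*x^3*y^4*z^3 + 1648*x^3*y^5*z^2 + 534*x^3*y^6*z + 72*x^3*y^7 + 129*x^4*z^6 +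 804*x^4*y*z^5 + (4131/2)*x^4*y^2*z^4 + (5605/2)*x^4*y^3*z^3 + 2122*x^4*y^4*z^2 + 854*x^4*y^5*z + 144*x^4*y^6 + 147*x^5*z^5 + 780*x^5*y*z^4 + (3255/2)*x^5*y^2*z^3 + 1676*x^5*y^3*z^2 + 850*x^5*y^4*z + 168*x^5*y^5 + 106*x^6*z^4 + 479*x^6*y*z^3 + 778*x^6*y^2*z^2 + 546*x^6*y^3*z + 144*x^6*y^4 + 44*x^7*z^3 + 172*x^7*y*z^2 + 206*x^7*y^2*z + 72*x^7*y^3 + 8*x^8*z^2 + 28*x^8*y*z + 24*x^8*y^2"
    unfolding x_def y_def z_def by (rule T_id)
  also have "\<dots> > 0"
    using x y z by (intro add_pos_nonneg mult_nonneg_nonneg zero_le_power mult_pos_pos zero_less_power; simp)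
  finally show ?thesis .
qed


lemma W_pos:
  assumes "-1 \<le> b" "b \<le> a" "a \<le> 1" "\<not> (a = b \<and> (a = 1 \<or> a = -1))"
  shows "WW a b > 0"
proof -
  have e1: "2*(1-a*b) = (1-a)*(1+b) + (1+a)*(1-b)" by algebra
  have n1: "(1-a)*(1+b) \<ge> 0" "(1+a)*(1-b) \<ge> 0" using assms by simp_all
  have "(1-a)*(1+b) + (1+a)*(1-b) > 0"
  proof (rule ccontr)
    assume "\<not> (1-a)*(1+b) + (1+a)*(1-b) > 0"
    then have "(1-a)*(1+b) = 0" "(1+a)*(1-b) = 0" using n1 by linarith+
    then show False using assms by auto
  qed
  then have "0 < 2*(1-a*b)" unfolding e1 .
  then have h1: "1 - a*b > 0" by simp
  have e2: "2*(1+a*b) = (1+a)*(1+b) + (1-a)*(1-b)" by algebra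
  have "(1+a)*(1+b) \<ge> 0" "(1-a)*(1-b) \<ge> 0" using assms by simp_all
  then have "0 \<le> 2*(1+a*b)" unfolding e2 by simp
  then have h2: "3 + a*b > 0" by simp
  have h3: "2 + a + b > 0" "2 - a - b > 0" using assms by auto
  show ?thesis unfolding WW_def using h1 h2 h3 by simp
qed

lemma WW_sym: "WW (-b) (-a) = WW a b"
  unfolding WW_def by (simp add: algebra_simps)
lemma NN_sym: "NN (-b) (-a) = - NN a b"
  unfolding NN_def by (simp add: algebra_simps)
lemma TT_sym: "TT (-b) (-a) = TT a b"
  unfolding TT_def WW_sym by (simp add: algebra_simps)
lemma RR_sym: "RR (-b) (-a) = - RR a b"
  unfolding RR_def WW_sym NN_sym by simp
lemma MM_sym: "MM a b = LL (-b) (-a)"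
  unfolding MM_def LL_def TT_sym RR_sym by simp

lemma WW_deriv: "((\<lambda>x. WW x b) has_real_derivative WD x b) (at x)"
  unfolding WW_def WD_def
  apply (rule derivative_eq_intros refl)+
  apply (simp add: eval_nat_numeral)
  apply algebra
  done

lemma NN_deriv: "((\<lambda>x. NN x b) has_real_derivative ND x b) (at x)"
  unfolding NN_def ND_def
  apply (rule derivative_eq_intros refl)+
  apply (simp add: eval_nat_numeral)
  apply algebra
  done


lemma TT_deriv:
  assumes "x \<noteq> b"
  shows "((\<lambda>x. TT x b) has_real_derivative
           (WD x b * (x-b)^6 - WW x b * (6*(x-b)^5)) / ((x-b)^6 * (x-b)^6)) (at x)"
proof -
  have d: "((\<lambda>x. (x-b)^6) has_real_derivative 6*(x-b)^5) (at x)"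
    by (rule derivative_eq_intros refl)+ simp
  show ?thesis unfolding TT_def
    by (rule DERIV_divide[OF WW_deriv d]) (use assms in simp)
qed

lemma T_dec:
  assumes "-1 \<le> b" "b < x1" "x1 < x2" "x2 \<le> 1"
  shows "TT x2 b < TT x1 b"
proof (rule DERIV_neg_imp_decreasing_open[where f="\<lambda>x. TT x b"])
  show "x1 < x2" by fact
  show "continuous_on {x1..x2} (\<lambda>x. TT x b)"
  proof (rule continuous_at_imp_continuous_on, rule ballI)
    fix x assume "x \<in> {x1..x2}"
    then have "x \<noteq> b" using assms by auto
    from TT_deriv[OF this] show "isCont (\<lambda>x. TT x b) x" by (rule DERIV_isCont)
  qed
  fix x assume x: "x1 < x" "x < x2"
  have xb: "x - b > 0" using x assms by auto
  have "6*WW x b - WD x b*(x-b) > 0" by (rule T_pos) (use x assms in auto)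
  then have "(x-b)^5 * (WD x b * (x-b) - 6*WW x b) < 0"
    using xb by (simp add: mult_pos_neg)
  then have "WD x b * (x-b)^6 - WW x b * (6*(x-b)^5) < 0"
    by (simp add: algebra_simps eval_nat_numeral)
  then have "(WD x b * (x-b)^6 - WW x b * (6*(x-b)^5)) / ((x-b)^6 * (x-b)^6) < 0"
    using xb by (simp add: divide_neg_pos)
  moreover have "((\<lambda>x. TT x b) has_real_derivative
           (WD x b * (x-b)^6 - WW x b * (6*(x-b)^5)) / ((x-b)^6 * (x-b)^6)) (at x)"
    by (rule TT_deriv) (use xb in simp)
  ultimately show "\<exists>y. ((\<lambda>x. TT x b) has_real_derivative y) (at x) \<and> y < 0"
    by blast
qed

lemma RR_deriv:
  assumes "WW x b > 0"
  shows "((\<lambda>x. RR x b) has_real_derivative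
     (ND x b * sqrt (WW x b) - NN x b * (inverse (sqrt (WW x b)) / 2 * WD x b)) / (sqrt (WW x b) * sqrt (WW x b))) (at x)"
proof -
  have d: "((\<lambda>x. sqrt (WW x b)) has_real_derivative inverse (sqrt (WW x b)) / 2 * WD x b) (at x)"
    by (rule DERIV_chain2[OF DERIV_real_sqrt[OF assms] WW_deriv])
  show ?thesis unfolding RR_def
    by (rule DERIV_divide[OF NN_deriv d]) (use assms in simp)
qed

lemma R_inc:
  assumes "-1 \<le> b" "b \<le> x1" "x1 < x2" "x2 \<le> 1" "x1 \<noteq> -1"
  shows "RR x1 b < RR x2 b"
proof (rule DERIV_pos_imp_increasing_open[where f="\<lambda>x. RR x b"])
  show "x1 < x2" by fact
  show "continuous_on {x1..x2} (\<lambda>x. RR x b)"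
  proof (rule continuous_at_imp_continuous_on, rule ballI)
    fix x assume "x \<in> {x1..x2}"
    then have "WW x b > 0" using assms by (intro W_pos) auto
    from RR_deriv[OF this] show "isCont (\<lambda>x. RR x b) x" by (rule DERIV_isCont)
  qed
  fix x assume x: "x1 < x" "x < x2"
  have W: "WW x b > 0" using x assms by (intro W_pos) auto
  define q where "q = sqrt (WW x b)"
  have q: "q > 0" "q * q = WW x b" using W by (auto simp: q_def)
  have G: "GG x b > 0" by (rule G_pos) (use x assms in auto)
  have "3 + x*b \<noteq> 0"
  proof
    assume "3 + x*b = 0"
    then have "WW x b = 0" unfolding WW_def by simp
    with W show False by simp
  qed
  then have F: "2*ND x b*WW x b - NN x b*WD x b > 0"
    unfolding F_id using G by simp
  have "ND x b * q - NN x b * (inverse q / 2 * WD x b) = (2*ND x b*(q*q) - NN x b*WD x b) / (2*q)"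
    using q by (simp add: field_simps)
  also have "\<dots> > 0" using F q by simp
  finally have "(ND x b * q - NN x b * (inverse q / 2 * WD x b)) / (q*q) > 0"
    using q W by (intro divide_pos_pos) simp_all
  with RR_deriv[OF W] show "\<exists>y. ((\<lambda>x. RR x b) has_real_derivative y) (at x) \<and> y > 0"
    unfolding q_def by blast
qed




lemma W1: "WW 1 b = ((3+b)^2*(1-b))^2"
  unfolding WW_def by algebra

lemma sqrtW1: "b \<le> 1 \<Longrightarrow> sqrt (WW 1 b) = (3+b)^2*(1-b)"
  unfolding W1 by simp

lemma NN1: "NN 1 b = 8*(1+b)*(1-b)"
  unfolding NN_def by algebra

lemma sqrtTT1:
  assumes "b < 1" shows "sqrt (TT 1 b) = (3+b)^2/(1-b)^2"
proof -
  have c: "1 - b > 0" using assms by simp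
  have e: "(1-b)^6 = ((1-b)^3)^2" by algebra
  have f: "(3+b)^2*(1-b)/(1-b)^3 = (3+b)^2/(1-b)^2"
    using c by (simp add: power3_eq_cube power2_eq_square)
  have "TT 1 b = ((3+b)^2*(1-b)/(1-b)^3)^2"
    unfolding TT_def W1 e power_divide ..
  also have "\<dots> = ((3+b)^2/(1-b)^2)^2" unfolding f ..
  finally show ?thesis by simp
qed

lemma RR1:
  assumes "-1 \<le> b" "b < 1" shows "RR 1 b = 8*(1+b)/(3+b)^2"
proof -
  have "(3+b) \<noteq> 0" "1 - b \<noteq> 0" using assms by auto
  then show ?thesis unfolding RR_def NN1 sqrtW1[OF less_imp_le[OF assms(2)]]
    by (simp add: field_simps)
qed

lemma one_minus_R1:
  assumes "-1 \<le> b" "b < 1" shows "1 - RR 1 b = (1-b)^2/(3+b)^2"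
proof -
  have nz: "(3+b)^2 \<noteq> 0" using assms by auto
  have id: "(3+b)^2 - 8*(1+b) = (1-b)^2" by algebra
  have "1 - 8*(1+b)/(3+b)^2 = ((3+b)^2 - 8*(1+b))/(3+b)^2"
    using nz by (simp add: diff_divide_eq_iff)
  also have "\<dots> = (1-b)^2/(3+b)^2" by (simp only: id)
  finally show ?thesis unfolding RR1[OF assms] .
qed

lemma one_plus_R1:
  assumes "-1 \<le> b" "b < 1" shows "1 + RR 1 b = (2*(3+b)^2 - (1-b)^2)/(3+b)^2"
proof -
  have nz: "(3+b)^2 \<noteq> 0" using assms by auto
  have id: "(3+b)^2 + 8*(1+b) = 2*(3+b)^2 - (1-b)^2" by algebra
  have "1 + 8*(1+b)/(3+b)^2 = ((3+b)^2 + 8*(1+b))/(3+b)^2"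
    using nz by (simp add: add_divide_eq_iff)
  also have "\<dots> = (2*(3+b)^2 - (1-b)^2)/(3+b)^2" by (simp only: id)
  finally show ?thesis unfolding RR1[OF assms] .
qed

lemma RR1_lt1:
  assumes "-1 \<le> b" "b < 1" shows "RR 1 b < 1"
proof -
  have "(1-b)^2/(3+b)^2 > 0" using assms by simp
  then show ?thesis using one_minus_R1[OF assms] by linarith
qed

lemma LL1:
  assumes "-1 \<le> b" "b < 1" shows "LL 1 b = 1"
proof -
  have "(3+b) \<noteq> 0" "1 - b \<noteq> 0" using assms by auto
  then show ?thesis unfolding LL_def sqrtTT1[OF assms(2)] one_minus_R1[OF assms]
    by simp
qed

lemma MM1:
  assumes "-1 \<le> b" "b < 1" shows "MM 1 b = 2*(3+b)^2/(1-b)^2 - 1"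
proof -
  have "(3+b) \<noteq> 0" "1 - b \<noteq> 0" using assms by auto
  then show ?thesis unfolding MM_def sqrtTT1[OF assms(2)] one_plus_R1[OF assms]
    by (simp add: field_simps)
qed

definition inA :: "real \<Rightarrow> real \<Rightarrow> bool" where
  "inA a b \<longleftrightarrow> -1 \<le> b \<and> b < a \<and> a \<le> 1"

lemma inA_sym: "inA a b \<Longrightarrow> inA (-b) (-a)"
  unfolding inA_def by auto

lemma W_posA: "inA a b \<Longrightarrow> WW a b > 0"
  unfolding inA_def by (intro W_pos) auto

lemma TT_pos: "inA a b \<Longrightarrow> TT a b > 0"
  unfolding TT_def using W_posA[of a b] by (simp add: inA_def)

lemma RR_lt1: assumes "inA a b" shows "RR a b < 1"
proof -
  have b: "-1 \<le> b" "b < 1" using assms by (auto simp: inA_def)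
  have "RR a b \<le> RR 1 b"
  proof (cases "a = 1")
    case False
    then show ?thesis using R_inc[of b a 1] assms by (auto simp: inA_def)
  qed simp
  then show ?thesis using RR1_lt1[OF b] by linarith
qed

lemma RR_gtm1: assumes "inA a b" shows "RR a b > -1"
  using RR_lt1[OF inA_sym[OF assms]] RR_sym[where a=a and b=b] by simp

lemma R_le: assumes "-1 \<le> b" "b \<le> x1" "x1 \<le> x2" "x2 \<le> 1" "x1 \<noteq> -1"
  shows "RR x1 b \<le> RR x2 b"
  using R_inc[of b x1 x2] assms by (cases "x1 = x2") auto

lemma L_dec:
  assumes "-1 \<le> b" "b < x1" "x1 < x2" "x2 \<le> 1"
  shows "LL x2 b < LL x1 b"
proof -
  have A1: "inA x1 b" "inA x2 b" using assms by (auto simp: inA_def)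
  have "sqrt (TT x2 b) < sqrt (TT x1 b)" using T_dec[OF assms] by simp
  moreover have "1 - RR x2 b < 1 - RR x1 b" using R_inc[of b x1 x2] assms by auto
  moreover have "0 < 1 - RR x2 b" using RR_lt1[OF A1(2)] by simp
  moreover have "0 \<le> sqrt (TT x2 b)" using TT_pos[OF A1(2)] by simp
  moreover have "0 < sqrt (TT x1 b)" using TT_pos[OF A1(1)] by simp
  moreover have "0 < TT x2 b" using TT_pos[OF A1(2)] by simp
  ultimately show ?thesis unfolding LL_def
    by (intro mult_strict_mono) auto
qed

lemma L_gt1: assumes "inA a b" "a < 1" shows "LL a b > 1"
proof -
  have "LL 1 b < LL a b" using assms by (intro L_dec) (auto simp: inA_def)
  then show ?thesis using LL1[of b] assms by (auto simp: inA_def)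
qed

lemma L_ge1: assumes "inA a b" shows "LL a b \<ge> 1"
  using L_gt1[OF assms] LL1[of b] assms by (cases "a = 1") (auto simp: inA_def)

lemma L_eq1_iff: assumes "inA a b" shows "LL a b = 1 \<longleftrightarrow> a = 1"
  using L_gt1[OF assms] LL1[of b] assms by (cases "a = 1") (auto simp: inA_def)

lemma M_ge1: assumes "inA a b" shows "MM a b \<ge> 1"
  unfolding MM_sym using L_ge1[OF inA_sym[OF assms]] .

lemma M_eq1_iff: assumes "inA a b" shows "MM a b = 1 \<longleftrightarrow> b = -1"
  unfolding MM_sym using L_eq1_iff[OF inA_sym[OF assms]] by auto

lemma sqrtTT: assumes "inA a b" shows "sqrt (TT a b) = sqrt (WW a b) / (a-b)^3"
proof -
  have "a - b > 0" using assms by (auto simp: inA_def)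
  then have "sqrt ((a-b)^6) = (a-b)^3"
    using real_sqrt_abs[of "(a-b)^3"] by (simp add: power_mult[symmetric])
  then show ?thesis unfolding TT_def real_sqrt_divide by simp
qed

lemma alg1: "(q::real) > 0 \<Longrightarrow> q/d*(1 - N/q) = (q-N)/d" "(q::real) > 0 \<Longrightarrow> q/d*(1 + N/q) = (q+N)/d"
proof -
  assume q: "q > 0"
  have "q*(1-N/q) = q - N" "q*(1+N/q) = q + N" using q by (simp_all add: right_diff_distrib distrib_left)
  then show "q/d*(1 - N/q) = (q-N)/d" "q/d*(1 + N/q) = (q+N)/d"
    by (simp_all only: times_divide_eq_left)
qed

lemma LL_alt: assumes "inA a b" shows "LL a b = (sqrt (WW a b) - NN a b)/(a-b)^3"
  unfolding LL_def sqrtTT[OF assms] RR_def by (rule alg1(1)) (use W_posA[OF assms] in simp)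

lemma MM_alt: assumes "inA a b" shows "MM a b = (sqrt (WW a b) + NN a b)/(a-b)^3"
  unfolding MM_def sqrtTT[OF assms] RR_def by (rule alg1(2)) (use W_posA[OF assms] in simp)

lemma sys_iff:
  assumes A: "inA a b" and lm: "l + m > 0"
  shows "sys a b l m \<longleftrightarrow> l = LL a b \<and> m = MM a b"
proof -
  define d where "d = (a-b)^3"
  define q where "q = sqrt (WW a b)"
  have d: "d > 0" using A by (auto simp: inA_def d_def)
  have q: "q > 0" "q^2 = WW a b" using W_posA[OF A] by (auto simp: q_def)
  have e1: "2 * (a + b) * (3 - a*b - a - b) * (3 - a*b + a + b) = 2 * NN a b"
    unfolding NN_def by algebra
  have e2: "4 * (3 + a*b)^3 * (1 - a*b) * (2 + a + b) * (2 - a - b) = 4 * WW a b"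
    unfolding WW_def by algebra
  have e3: "(a-b)^6 = d^2" unfolding d_def by algebra
  have sysE: "sys a b l m \<longleftrightarrow> 2 * NN a b + (l - m) * d = 0 \<and> ((l+m)*d)^2 = (2*q)^2"
    unfolding sys_def e1 e2 e3 d_def[symmetric] using q by (simp add: power_mult_distrib)
  have "((l+m)*d)^2 = (2*q)^2 \<longleftrightarrow> (l+m)*d = 2*q"
    using lm d q by (intro power2_eq_iff_nonneg) auto
  then have sysE2: "sys a b l m \<longleftrightarrow> 2 * NN a b + (l - m) * d = 0 \<and> (l+m)*d = 2*q"
    using sysE by simp
  have LM: "LL a b = (q - NN a b)/d" "MM a b = (q + NN a b)/d"
    unfolding LL_alt[OF A] MM_alt[OF A] q_def d_def by simp_all
  show ?thesis unfolding sysE2 LM using d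
    by (auto simp: field_simps)
qed

lemma LM_TR: assumes "inA a b"
  shows "LL a b + MM a b = 2 * sqrt (TT a b)" "MM a b - LL a b = 2 * sqrt (TT a b) * RR a b"
  unfolding LL_def MM_def by (simp_all add: algebra_simps)

lemma T_mono_b:
  assumes "-1 \<le> b1" "b1 < b2" "b2 < a" "a \<le> 1"
  shows "TT a b1 < TT a b2"
  using T_dec[of "-a" "-b2" "-b1"] assms TT_sym[where a=a and b=b1] TT_sym[where a=a and b=b2] by auto

lemma R_mono_b:
  assumes "-1 \<le> b1" "b1 < b2" "b2 < a" "a \<le> 1"
  shows "RR a b1 < RR a b2"
  using R_inc[of "-a" "-b2" "-b1"] assms RR_sym[where a=a and b=b1] RR_sym[where a=a and b=b2] by auto

lemma inj_aux:
  assumes A1: "inA a1 b1" and A2: "inA a2 b2" and le: "a1 \<le> a2"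
    and T: "TT a1 b1 = TT a2 b2" and R: "RR a1 b1 = RR a2 b2"
  shows "a1 = a2 \<and> b1 = b2"
proof (cases "b1 < b2")
  case True
  have "RR a1 b1 < RR a2 b2"
  proof (cases "a1 = a2")
    case True
    then show ?thesis using R_mono_b[of b1 b2 a2] \<open>b1 < b2\<close> A1 A2 by (auto simp: inA_def)
  next
    case False
    then have "RR a1 b1 < RR a2 b1" using A1 A2 le by (intro R_inc) (auto simp: inA_def)
    also have "\<dots> < RR a2 b2" using R_mono_b[of b1 b2 a2] \<open>b1 < b2\<close> A1 A2 by (auto simp: inA_def)
    finally show ?thesis .
  qed
  then show ?thesis using R by simp
next
  case False
  have s1: "TT a2 b1 \<le> TT a1 b1" and s1': "a1 < a2 \<Longrightarrow> TT a2 b1 < TT a1 b1"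
    using T_dec[of b1 a1 a2] A1 A2 le by (cases "a1 = a2"; auto simp: inA_def)+
  have s2: "TT a2 b2 \<le> TT a2 b1" and s2': "b2 < b1 \<Longrightarrow> TT a2 b2 < TT a2 b1"
    using T_mono_b[of b2 b1 a2] A1 A2 le False by (cases "b1 = b2"; auto simp: inA_def)+
  show ?thesis
  proof (rule ccontr)
    assume "\<not> (a1 = a2 \<and> b1 = b2)"
    then have "a1 < a2 \<or> b2 < b1" using le False by auto
    then have "TT a2 b2 < TT a1 b1" using s1 s2 s1' s2' by force
    then show False using T by simp
  qed
qed

lemma LM_inj:
  assumes A1: "inA a1 b1" and A2: "inA a2 b2"
    and L: "LL a1 b1 = LL a2 b2" and M: "MM a1 b1 = MM a2 b2"
  shows "a1 = a2 \<and> b1 = b2"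
proof -
  have sT: "sqrt (TT a1 b1) = sqrt (TT a2 b2)" using LM_TR[OF A1] LM_TR[OF A2] L M by simp
  then have T: "TT a1 b1 = TT a2 b2" by simp
  have "sqrt (TT a1 b1) > 0" using TT_pos[OF A1] by simp
  then have R: "RR a1 b1 = RR a2 b2" using LM_TR(2)[OF A1] LM_TR(2)[OF A2] L M sT by simp
  show ?thesis
  proof (cases "a1 \<le> a2")
    case True show ?thesis by (rule inj_aux[OF A1 A2 True T R])
  next
    case False then show ?thesis using inj_aux[OF A2 A1 _ T[symmetric] R[symmetric]] by simp
  qed
qed




lemma WW_cont_a: "isCont (\<lambda>x. WW x b) x"
  by (rule DERIV_isCont[OF WW_deriv])
lemma NN_cont_a: "isCont (\<lambda>x. NN x b) x"
  by (rule DERIV_isCont[OF NN_deriv])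
lemma WW_cont_b: "isCont (\<lambda>b. WW a b) b"
  unfolding WW_def by (intro continuous_intros)
lemma NN_cont_b: "isCont (\<lambda>b. NN a b) b"
  unfolding NN_def by (intro continuous_intros)

lemma L_cont_a: assumes "inA x b" shows "isCont (\<lambda>x. LL x b) x"
proof -
  have W: "WW x b > 0" by (rule W_posA[OF assms])
  have d: "x - b \<noteq> 0" using assms by (auto simp: inA_def)
  show ?thesis unfolding LL_def TT_def RR_def
    by (intro continuous_intros WW_cont_a NN_cont_a) (use W d in auto)
qed

lemma L_cont_b: assumes "inA a y" shows "isCont (\<lambda>b. LL a b) y"
proof -
  have W: "WW a y > 0" by (rule W_posA[OF assms])
  have d: "a - y \<noteq> 0" using assms by (auto simp: inA_def)
  show ?thesis unfolding LL_def TT_def RR_def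
    by (intro continuous_intros WW_cont_b NN_cont_b) (use W d in auto)
qed

lemma surj_L1:
  assumes "m \<ge> 1" shows "\<exists>b. -1 \<le> b \<and> b < 1 \<and> MM 1 b = m"
proof -
  define k where "k = sqrt ((m+1)/2)"
  have k1: "k \<ge> 1" using assms by (simp add: k_def)
  have k2: "k^2 = (m+1)/2" using assms by (simp add: k_def)
  define b where "b = (k-3)/(k+1)"
  have b1: "-1 \<le> b" "b < 1" using k1 by (simp_all add: b_def field_simps)
  have "(3+b)/(1-b) = k" using k1 by (simp add: b_def field_simps)
  then have "(3+b)^2/(1-b)^2 = k^2" unfolding power_divide[symmetric] by simp
  then have "MM 1 b = 2*k^2 - 1" unfolding MM1[OF b1] by simp
  then have "MM 1 b = m" using k2 by (simp add: field_simps)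
  then show ?thesis using b1 by blast
qed

lemma L_big:
  assumes "-1 \<le> al" "al < 1"
  shows "\<exists>a. al < a \<and> a \<le> 1 \<and> LL a al \<ge> l0"
proof (cases "al = -1")
  case True
  define a where "a = -1 + 1/(max l0 1 + 1)"
  define k where "k = max l0 1 + 1"
  have k: "k \<ge> 2" "l0 \<le> k" by (auto simp: k_def)
  have a1: "-1 < a" "a \<le> 1" using k by (auto simp: a_def k_def[symmetric] field_simps)
  have "LL a (-1) = MM 1 (-a)" using MM_sym[where a=1 and b="-a"] by simp
  also have "\<dots> = 2*(3-a)^2/(1+a)^2 - 1" using a1 MM1[of "-a"] by simp
  also have "\<dots> = 2*(3-a)^2*k^2 - 1" by (simp add: a_def k_def[symmetric] power_divide)
  also have "\<dots> \<ge> 2*4*k^2 - 1"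
  proof -
    have "(3-a)^2 \<ge> 2^2" using a1 by (intro power_mono) auto
    then show ?thesis by (simp add: mult_right_mono)
  qed
  finally have "LL a (-1) \<ge> 8*k^2 - 1" by simp
  moreover have "8*k^2 - 1 \<ge> k"
  proof -
    have kk: "k*k \<ge> 2*k" using k by (intro mult_right_mono) auto
    show ?thesis using k kk unfolding power2_eq_square by linarith
  qed
  ultimately show ?thesis using True a1 k by (intro exI[of _ a]) auto
next
  case False
  then have al: "-1 < al" "al < 1" using assms by auto
  have Wa: "WW al al > 0" using al by (intro W_pos) auto
  have "RR al al < RR 1 al" using al by (intro R_inc) auto
  then have Ra: "RR al al < 1" using RR1_lt1[of al] al by simp
  define c where "c = sqrt (WW al al) - NN al al"
  have c: "c > 0"
  proof -
    have "NN al al / sqrt (WW al al) < 1" using Ra by (simp add: RR_def)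
    then have "NN al al < sqrt (WW al al)" using Wa by (simp add: divide_less_eq)
    then show ?thesis by (simp add: c_def)
  qed
  have "isCont (\<lambda>a. sqrt (WW a al) - NN a al) al"
    by (intro continuous_intros WW_cont_a NN_cont_a)
  then have f: "((\<lambda>a. sqrt (WW a al) - NN a al) \<longlongrightarrow> c) (at_right al)"
    unfolding isCont_def c_def by (rule tendsto_mono[OF at_le, rotated]) simp
  have g: "((\<lambda>a. (a - al)^3) \<longlongrightarrow> 0) (at_right al)"
  proof -
    have "isCont (\<lambda>a. (a - al)^3) al" by (intro continuous_intros)
    then have "((\<lambda>a. (a - al)^3) \<longlongrightarrow> (al - al)^3) (at_right al)"
      unfolding isCont_def by (rule tendsto_mono[OF at_le, rotated]) simp
    then show ?thesis by simp
  qed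
  have gpos: "eventually (\<lambda>a. 0 < (a - al)^3) (at_right al)"
    using eventually_at_right_less[of al] by eventually_elim simp
  have lim: "LIM a (at_right al). (sqrt (WW a al) - NN a al) / (a - al)^3 :> at_top"
    by (rule LIM_at_top_divide[OF f c g gpos])
  have ev1: "eventually (\<lambda>a. l0 \<le> (sqrt (WW a al) - NN a al) / (a - al)^3) (at_right al)"
    using lim unfolding filterlim_at_top by blast
  have ev2: "eventually (\<lambda>a. a \<in> {al<..<1}) (at_right al)"
    by (rule eventually_at_right_real[OF al(2)])
  have "eventually (\<lambda>a. al < a \<and> a \<le> 1 \<and> l0 \<le> LL a al) (at_right al)"
    using ev1 ev2
  proof eventually_elim
    case (elim a)
    then have "inA a al" using al by (auto simp: inA_def)
    then show ?case using elim LL_alt[of a al] by auto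
  qed
  then show ?thesis using eventually_happens'[of "at_right al"] by auto
qed

lemma L_solve:
  assumes "-1 \<le> al" "al < 1" "l0 \<ge> 1"
  shows "\<exists>a. al < a \<and> a \<le> 1 \<and> LL a al = l0"
proof -
  obtain a' where a': "al < a'" "a' \<le> 1" "LL a' al \<ge> l0" using L_big[OF assms(1,2)] by blast
  have "continuous_on {a'..1} (\<lambda>a. LL a al)"
  proof (rule continuous_at_imp_continuous_on, rule ballI)
    fix x assume "x \<in> {a'..1}"
    then have "inA x al" using a' assms by (auto simp: inA_def)
    then show "isCont (\<lambda>a. LL a al) x" by (rule L_cont_a)
  qed
  moreover have "LL 1 al \<le> l0" using LL1[of al] assms by simp
  ultimately obtain a where "a' \<le> a" "a \<le> 1" "LL a al = l0"
    using IVT2'[of "\<lambda>a. LL a al" 1 l0 a'] a' by auto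
  then show ?thesis using a' by (intro exI[of _ a]) auto
qed

lemma L_solve_unique:
  assumes "-1 \<le> al" "al < a1" "a1 \<le> 1" "al < a2" "a2 \<le> 1" "LL a1 al = LL a2 al"
  shows "a1 = a2"
  using L_dec[of al a1 a2] L_dec[of al a2 a1] assms by (cases "a1 < a2"; cases "a2 < a1") auto




lemma diag:
  assumes "R0 < (1::real)" shows "\<exists>t. 0 \<le> t \<and> t < 1 \<and> RR t t \<ge> R0"
proof (cases "R0 \<le> 0")
  case True
  have "RR 0 0 = 0" by (simp add: RR_def NN_def)
  then show ?thesis using True by (intro exI[of _ 0]) auto
next
  case False
  then have R0: "0 < R0" "R0 < 1" using assms by auto
  define u where "u = (1 - R0)/2"
  have u: "0 < u" "u < 1" "u \<le> 1 - R0^2"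
  proof -
    show "0 < u" "u < 1" using R0 by (auto simp: u_def)
    have "1 - R0^2 - u = (1 - R0)*(1/2 + R0)" by (simp add: u_def power2_eq_square algebra_simps)
    also have "\<dots> \<ge> 0" using R0 by simp
    finally show "u \<le> 1 - R0^2" by simp
  qed
  define t where "t = sqrt (1 - u)"
  have t: "0 \<le> t" "t < 1" "t^2 = 1 - u" using u by (auto simp: t_def)
  have N: "NN t t = 2*t*(1-t^2)*(9-t^2)" unfolding NN_def by algebra
  have W: "WW t t = 4*(3+t^2)^3*(1-t^2)^2" unfolding WW_def by algebra
  have WN: "WW t t - (NN t t)^2 = 108*(1-t^2)^4" unfolding WW_def NN_def by algebra
  have c27: "(3+t^2)^3 \<ge> 3^3" by (intro power_mono) auto
  have Wpos: "WW t t > 0" unfolding W using t u by simp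
  have Wge: "WW t t \<ge> 108*u^2"
  proof -
    have "WW t t = 4*(3+t^2)^3*u^2" unfolding W t(3) by simp
    also have "\<dots> \<ge> 4*27*u^2" using c27 by (intro mult_right_mono) auto
    finally show ?thesis by simp
  qed
  have Nnn: "NN t t \<ge> 0" unfolding N using t u by simp
  have RRsq: "(RR t t)^2 = (NN t t)^2 / WW t t"
    unfolding RR_def using Wpos by (simp add: power_divide)
  have "108*u^4 \<le> 108*u^2*(1 - R0^2)"
  proof -
    have "u^2 \<le> u" using u by (simp add: power2_eq_square mult_left_le_one_le)
    then have "u^2 \<le> 1 - R0^2" using u by linarith
    then have "u^2*u^2 \<le> u^2*(1 - R0^2)" by (intro mult_left_mono) auto
    then show ?thesis by (simp add: power4_eq_xxxx power2_eq_square algebra_simps)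
  qed
  also have "\<dots> \<le> WW t t * (1 - R0^2)"
    using Wge u by (intro mult_right_mono) auto
  finally have "R0^2 * WW t t \<le> (NN t t)^2"
    using WN unfolding t(3) by (simp add: algebra_simps)
  then have "R0^2 \<le> (RR t t)^2" unfolding RRsq using Wpos by (simp add: le_divide_eq)
  moreover have "RR t t \<ge> 0" unfolding RR_def using Nnn Wpos by (intro divide_nonneg_nonneg) auto
  ultimately have "R0 \<le> RR t t" by (rule power2_le_imp_le)
  then show ?thesis using t by blast
qed



lemma main_surj:
  assumes l0: "l0 > 1" and m0: "m0 \<ge> 1"
  shows "\<exists>a b. inA a b \<and> LL a b = l0 \<and> MM a b = m0"
proof -
  define R0 where "R0 = (m0-l0)/(m0+l0)"
  have R0lt: "R0 < 1" using l0 m0 by (simp add: R0_def)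
  obtain t where t: "0 \<le> t" "t < 1" "RR t t \<ge> R0" using diag[OF R0lt] by blast
  define S where "S = {-1..t}"
  define phi where "phi al = (THE a. al < a \<and> a \<le> 1 \<and> LL a al = l0)" for al
  have phi: "al < phi al \<and> phi al < 1 \<and> LL (phi al) al = l0" if al: "-1 \<le> al" "al < 1" for al
  proof -
    obtain a where a: "al < a" "a \<le> 1" "LL a al = l0" using L_solve[of al l0] al l0 by auto
    have "phi al = a" unfolding phi_def
    proof (rule the_equality)
      show "al < a \<and> a \<le> 1 \<and> LL a al = l0" using a by simp
      fix a' assume "al < a' \<and> a' \<le> 1 \<and> LL a' al = l0"
      then show "a' = a" using L_solve_unique[of al a' a] a al by simp
    qed
    moreover have "a \<noteq> 1" using a LL1[of al] al l0 by auto
    ultimately show ?thesis using a by auto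
  qed
  have Sprop: "-1 \<le> y \<and> y < 1" if "y \<in> S" for y using that t by (auto simp: S_def)
  have cont: "continuous_on S phi"
    unfolding continuous_on_iff
  proof (intro ballI allI impI)
    fix x e assume x: "x \<in> S" and e: "(0::real) < e"
    have xs: "-1 \<le> x" "x < 1" using Sprop[OF x] by auto
    define a0 where "a0 = phi x"
    have a0: "x < a0" "a0 < 1" "LL a0 x = l0" using phi[OF xs] by (auto simp: a0_def)
    define a1 where "a1 = max (a0 - e/2) ((x + a0)/2)"
    define a2 where "a2 = min (a0 + e/2) 1"
    have a1: "x < a1" "a1 < a0" "a0 - e/2 \<le> a1" using a0 e unfolding a1_def
      by (simp_all add: less_max_iff_disj max_less_iff_conj field_simps)
    have a2: "a0 < a2" "a2 \<le> 1" "a2 \<le> a0 + e/2" using a0 e unfolding a2_def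
      by (simp_all add: min_less_iff_conj min_le_iff_disj)
    have L1: "LL a1 x > l0" using L_dec[of x a1 a0] a0 a1 xs by auto
    have L2: "LL a2 x < l0" using L_dec[of x a0 a2] a0 a2 xs by auto
    have c1: "isCont (\<lambda>b. LL a1 b) x" using a1 a0 xs by (intro L_cont_b) (auto simp: inA_def)
    have c2: "isCont (\<lambda>b. LL a2 b) x" using a2 a0 xs by (intro L_cont_b) (auto simp: inA_def)
    obtain d1 where d1: "d1 > 0" "\<And>y. y \<noteq> x \<and> norm (y - x) < d1 \<Longrightarrow> norm (LL a1 y - LL a1 x) < LL a1 x - l0"
      using LIM_D[OF c1[unfolded isCont_def], of "LL a1 x - l0"] L1 by auto
    obtain d2 where d2: "d2 > 0" "\<And>y. y \<noteq> x \<and> norm (y - x) < d2 \<Longrightarrow> norm (LL a2 y - LL a2 x) < l0 - LL a2 x"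
      using LIM_D[OF c2[unfolded isCont_def], of "l0 - LL a2 x"] L2 by auto
    show "\<exists>d>0. \<forall>y\<in>S. dist y x < d \<longrightarrow> dist (phi y) (phi x) < e"
    proof (intro exI[of _ "min (min d1 d2) (a1 - x)"] conjI ballI impI)
      show "0 < min (min d1 d2) (a1 - x)" using d1 d2 a1 by auto
      fix y assume y: "y \<in> S" "dist y x < min (min d1 d2) (a1 - x)"
      have ys: "-1 \<le> y" "y < 1" using Sprop[OF y(1)] by auto
      have ya1: "y < a1" using y(2) by (auto simp: dist_real_def)
      have La1: "LL a1 y > l0"
      proof (cases "y = x")
        case True then show ?thesis using L1 by simp
      next
        case False
        then have "norm (LL a1 y - LL a1 x) < LL a1 x - l0" using d1(2)[of y] y(2) by (auto simp: dist_real_def)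
        then show ?thesis by auto
      qed
      have La2: "LL a2 y < l0"
      proof (cases "y = x")
        case True then show ?thesis using L2 by simp
      next
        case False
        then have "norm (LL a2 y - LL a2 x) < l0 - LL a2 x" using d2(2)[of y] y(2) by (auto simp: dist_real_def)
        then show ?thesis by auto
      qed
      have p: "y < phi y" "phi y < 1" "LL (phi y) y = l0" using phi[OF ys] by auto
      have g1: "phi y > a1"
      proof (rule ccontr)
        assume "\<not> phi y > a1"
        then have "phi y < a1 \<or> phi y = a1" by auto
        then show False
        proof
          assume "phi y < a1"
          then have "LL a1 y < LL (phi y) y" using L_dec[of y "phi y" a1] p ys ya1 a1 a0 by auto
          then show False using p La1 by simp
        qed (use p La1 in simp)
      qed
      have g2: "phi y < a2"
      proof (rule ccontr)
        assume "\<not> phi y < a2"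
        then have "a2 < phi y \<or> phi y = a2" by auto
        then show False
        proof
          assume "a2 < phi y"
          then have "LL (phi y) y < LL a2 y" using L_dec[of y a2 "phi y"] p ys ya1 a1 a2 by auto
          then show False using p La2 by simp
        qed (use p La2 in simp)
      qed
      show "dist (phi y) (phi x) < e"
        using g1 g2 a1 a2 e unfolding a0_def[symmetric] dist_real_def by auto
    qed
  qed
  have Wphi: "WW (phi al) al > 0" if "al \<in> S" for al
    using phi[of al] Sprop[OF that] by (intro W_posA) (auto simp: inA_def)
  have gcont: "continuous_on S (\<lambda>al. RR (phi al) al)"
  proof -
    have c1: "continuous_on S (\<lambda>al. NN (phi al) al)"
      unfolding NN_def by (intro continuous_intros cont)
    have c2: "continuous_on S (\<lambda>al. WW (phi al) al)"
      unfolding WW_def by (intro continuous_intros cont)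
    show ?thesis unfolding RR_def
      by (intro continuous_intros c1 c2) (use Wphi in force)
  qed
  have RRform: "RR a b = (MM a b - LL a b) / (LL a b + MM a b)" if "inA a b" for a b
  proof -
    have "sqrt (TT a b) > 0" using TT_pos[OF that] by simp
    then show ?thesis using LM_TR[OF that] by (simp add: field_simps)
  qed
  have gleft: "RR (phi (-1)) (-1) \<le> R0"
  proof -
    have p: "-1 < phi (-1)" "phi (-1) < 1" "LL (phi (-1)) (-1) = l0" using phi[of "-1"] by auto
    have A: "inA (phi (-1)) (-1)" using p by (auto simp: inA_def)
    have "MM (phi (-1)) (-1) = 1" using M_eq1_iff[OF A] by simp
    then have "RR (phi (-1)) (-1) = (1 - l0)/(l0 + 1)" using RRform[OF A] p by simp
    also have "\<dots> = ((1-l0)*(m0+l0))/((l0+1)*(m0+l0))" using l0 m0 by simp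
    also have "\<dots> \<le> ((m0-l0)*(l0+1))/((l0+1)*(m0+l0))"
    proof (rule divide_right_mono)
      have "(m0-l0)*(l0+1) - (1-l0)*(m0+l0) = 2*l0*(m0-1)" by algebra
      also have "\<dots> \<ge> 0" using l0 m0 by simp
      finally show "(1-l0)*(m0+l0) \<le> (m0-l0)*(l0+1)" by simp
    qed (use l0 m0 in simp)
    also have "\<dots> = R0" using l0 m0 by (simp add: R0_def)
    finally show ?thesis .
  qed
  have gright: "RR (phi t) t \<ge> R0"
  proof -
    have "RR t t < RR (phi t) t" using phi[of t] t by (intro R_inc) auto
    then show ?thesis using t by simp
  qed
  obtain x where x: "-1 \<le> x" "x \<le> t" "RR (phi x) x = R0"
    using IVT'[of "\<lambda>al. RR (phi al) al" "-1" R0 t] gleft gright gcont t by (auto simp: S_def)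
  have xs: "-1 \<le> x" "x < 1" using x t by auto
  have p: "x < phi x" "phi x < 1" "LL (phi x) x = l0" using phi[OF xs] by auto
  have A: "inA (phi x) x" using p xs by (auto simp: inA_def)
  define w0 where "w0 = sqrt (TT (phi x) x)"
  have e1: "1 - R0 = 2*l0/(m0+l0)" "1 + R0 = 2*m0/(m0+l0)" using l0 m0 by (simp_all add: R0_def field_simps)
  have "w0 * (2*l0/(m0+l0)) = l0" using p(3) x(3) e1 unfolding LL_def w0_def by simp
  then have "l0 * (2 * w0) = l0 * (m0+l0)" using l0 m0 by (simp add: field_simps)
  then have "2 * w0 = m0+l0" using l0 by simp
  then have sgv: "w0 = (m0+l0)/2" by simp
  have "MM (phi x) x = w0 * (2*m0/(m0+l0))" using x(3) e1 unfolding MM_def w0_def by simp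
  also have "\<dots> = m0" unfolding sgv using l0 m0 by (simp add: field_simps)
  finally show ?thesis using A p by blast
qed




lemma inA_iff: "(a, b) \<in> frakA \<longleftrightarrow> inA a b"
  by (simp add: frakA_def inA_def)

lemma LM_Omega: "inA a b \<Longrightarrow> (LL a b, MM a b) \<in> Omega"
  using L_ge1 M_ge1 by (simp add: Omega_def)

lemma corr_unique:
  assumes "inA a b" "q \<in> Omega" "sys a b (fst q) (snd q)"
  shows "q = (LL a b, MM a b)"
proof -
  have "fst q + snd q > 0" using assms(2) by (auto simp: Omega_def)
  then show ?thesis using sys_iff[OF assms(1)] assms(3) by (cases q) auto
qed

lemma corr_sys:
  assumes "inA a b" shows "sys a b (LL a b) (MM a b)"
proof -
  have "LL a b + MM a b > 0" using L_ge1[OF assms] M_ge1[OF assms] by simp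
  then show ?thesis using sys_iff[OF assms] by simp
qed

lemma corr_eq: assumes "inA a b" shows "corr (a, b) = (LL a b, MM a b)"
  unfolding corr_def
proof (rule the_equality)
  show "(LL a b, MM a b) \<in> Omega \<and> sys (fst (a, b)) (snd (a, b)) (fst (LL a b, MM a b)) (snd (LL a b, MM a b))"
    using LM_Omega[OF assms] corr_sys[OF assms] by simp
  fix q assume "q \<in> Omega \<and> sys (fst (a, b)) (snd (a, b)) (fst q) (snd q)"
  then show "q = (LL a b, MM a b)" using corr_unique[OF assms] by simp
qed

lemma surj_all:
  assumes "l \<ge> 1" "m \<ge> 1"
  shows "\<exists>a b. inA a b \<and> LL a b = l \<and> MM a b = m"
proof (cases "l = 1")
  case True
  obtain b where b: "-1 \<le> b" "b < 1" "MM 1 b = m" using surj_L1[OF assms(2)] by blast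
  have "inA 1 b" using b by (simp add: inA_def)
  moreover have "LL 1 b = l" using LL1[OF b(1,2)] True by simp
  ultimately show ?thesis using b by blast
next
  case False
  then show ?thesis using main_surj[of l m] assms by simp
qed

theorem theorem3p2:
  shows "(\<forall>p\<in>frakA. \<exists>!q. q \<in> Omega \<and> sys (fst p) (snd p) (fst q) (snd q))
    \<and> bij_betw corr frakA Omega
    \<and> corr ` {(a, al). -1 < al \<and> al < a \<and> a < 1} = {(l, m). l > 1 \<and> m > 1}
    \<and> corr ` {p \<in> frakA. fst p = 1} = {q \<in> Omega. fst q = 1}
    \<and> corr ` {p \<in> frakA. snd p = -1} = {q \<in> Omega. snd q = 1}
    \<and> corr (1, -1) = (1, 1)"
proof (intro conjI)
  show "\<forall>p\<in>frakA. \<exists>!q. q \<in> Omega \<and> sys (fst p) (snd p) (fst q) (snd q)"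
  proof
    fix p assume "p \<in> frakA"
    then obtain a b where p: "p = (a, b)" "inA a b" by (cases p) (auto simp: inA_iff)
    show "\<exists>!q. q \<in> Omega \<and> sys (fst p) (snd p) (fst q) (snd q)"
    proof (rule ex1I[of _ "(LL a b, MM a b)"])
      show "(LL a b, MM a b) \<in> Omega \<and> sys (fst p) (snd p) (fst (LL a b, MM a b)) (snd (LL a b, MM a b))"
        using LM_Omega[OF p(2)] corr_sys[OF p(2)] p(1) by simp
      fix q assume "q \<in> Omega \<and> sys (fst p) (snd p) (fst q) (snd q)"
      then show "q = (LL a b, MM a b)" using corr_unique[OF p(2)] p(1) by simp
    qed
  qed
  have img: "corr ` frakA = Omega"
  proof
    show "corr ` frakA \<subseteq> Omega"
    proof
      fix q assume "q \<in> corr ` frakA"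
      then obtain a b where "(a, b) \<in> frakA" "q = corr (a, b)" by auto
      then show "q \<in> Omega" using corr_eq LM_Omega by (simp add: inA_iff)
    qed
    show "Omega \<subseteq> corr ` frakA"
    proof
      fix q assume q: "q \<in> Omega"
      obtain l m where lm: "q = (l, m)" "l \<ge> 1" "m \<ge> 1" using q by (cases q) (auto simp: Omega_def)
      obtain a b where ab: "inA a b" "LL a b = l" "MM a b = m" using surj_all[OF lm(2,3)] by blast
      have "q = corr (a, b)" using corr_eq[OF ab(1)] ab lm by simp
      then show "q \<in> corr ` frakA" using ab(1) by (auto simp: inA_iff)
    qed
  qed
  have inj: "inj_on corr frakA"
  proof (rule inj_onI)
    fix p1 p2 assume p: "p1 \<in> frakA" "p2 \<in> frakA" "corr p1 = corr p2"
    obtain a1 b1 where p1: "p1 = (a1, b1)" "inA a1 b1" using p(1) by (cases p1) (auto simp: inA_iff)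
    obtain a2 b2 where p2: "p2 = (a2, b2)" "inA a2 b2" using p(2) by (cases p2) (auto simp: inA_iff)
    have "LL a1 b1 = LL a2 b2" "MM a1 b1 = MM a2 b2"
      using p(3) corr_eq[OF p1(2)] corr_eq[OF p2(2)] p1(1) p2(1) by simp_all
    then show "p1 = p2" using LM_inj[OF p1(2) p2(2)] p1(1) p2(1) by simp
  qed
  show "bij_betw corr frakA Omega" unfolding bij_betw_def using inj img by simp
  show "corr ` {(a, al). -1 < al \<and> al < a \<and> a < 1} = {(l, m). l > 1 \<and> m > 1}"
  proof
    show "corr ` {(a, al). -1 < al \<and> al < a \<and> a < 1} \<subseteq> {(l, m). l > 1 \<and> m > 1}"
    proof
      fix q assume "q \<in> corr ` {(a, al). -1 < al \<and> al < a \<and> a < 1}"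
      then obtain a b where ab: "-1 < b" "b < a" "a < 1" "q = corr (a, b)" by auto
      have A: "inA a b" using ab by (simp add: inA_def)
      have "LL a b > 1" using L_gt1[OF A ab(3)] .
      moreover have "MM a b > 1" using M_ge1[OF A] M_eq1_iff[OF A] ab(1) by force
      ultimately show "q \<in> {(l, m). l > 1 \<and> m > 1}" using corr_eq[OF A] ab(4) by simp
    qed
    show "{(l, m). l > 1 \<and> m > 1} \<subseteq> corr ` {(a, al). -1 < al \<and> al < a \<and> a < 1}"
    proof
      fix q assume "q \<in> {(l, m). (l::real) > 1 \<and> (m::real) > 1}"
      then obtain l m where lm: "q = (l, m)" "l > 1" "m > 1" by auto
      obtain a b where ab: "inA a b" "LL a b = l" "MM a b = m" using surj_all[of l m] lm by auto
      have "a \<noteq> 1" using L_eq1_iff[OF ab(1)] ab lm by auto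
      moreover have "b \<noteq> -1" using M_eq1_iff[OF ab(1)] ab lm by auto
      ultimately have "(a, b) \<in> {(a, al). -1 < al \<and> al < a \<and> a < 1}" using ab(1) by (auto simp: inA_def)
      moreover have "q = corr (a, b)" using corr_eq[OF ab(1)] ab lm by simp
      ultimately show "q \<in> corr ` {(a, al). -1 < al \<and> al < a \<and> a < 1}" by blast
    qed
  qed
  show "corr ` {p \<in> frakA. fst p = 1} = {q \<in> Omega. fst q = 1}"
  proof
    show "corr ` {p \<in> frakA. fst p = 1} \<subseteq> {q \<in> Omega. fst q = 1}"
    proof
      fix q assume "q \<in> corr ` {p \<in> frakA. fst p = 1}"
      then obtain a b where ab: "(a, b) \<in> frakA" "a = 1" "q = corr (a, b)" by auto
      have A: "inA a b" using ab by (simp add: inA_iff)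
      show "q \<in> {q \<in> Omega. fst q = 1}" using corr_eq[OF A] ab LM_Omega[OF A] L_eq1_iff[OF A] by simp
    qed
    show "{q \<in> Omega. fst q = 1} \<subseteq> corr ` {p \<in> frakA. fst p = 1}"
    proof
      fix q assume q: "q \<in> {q \<in> Omega. fst q = 1}"
      obtain l m where lm: "q = (l, m)" "l = 1" "m \<ge> 1" using q by (cases q) (auto simp: Omega_def)
      obtain a b where ab: "inA a b" "LL a b = l" "MM a b = m" using surj_all[of l m] lm by auto
      have "a = 1" using L_eq1_iff[OF ab(1)] ab lm by auto
      then have "(a, b) \<in> {p \<in> frakA. fst p = 1}" using ab(1) by (auto simp: inA_iff)
      moreover have "q = corr (a, b)" using corr_eq[OF ab(1)] ab lm by simp
      ultimately show "q \<in> corr ` {p \<in> frakA. fst p = 1}" by blast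
    qed
  qed
  show "corr ` {p \<in> frakA. snd p = -1} = {q \<in> Omega. snd q = 1}"
  proof
    show "corr ` {p \<in> frakA. snd p = -1} \<subseteq> {q \<in> Omega. snd q = 1}"
    proof
      fix q assume "q \<in> corr ` {p \<in> frakA. snd p = -1}"
      then obtain a b where ab: "(a, b) \<in> frakA" "b = -1" "q = corr (a, b)" by auto
      have A: "inA a b" using ab by (simp add: inA_iff)
      show "q \<in> {q \<in> Omega. snd q = 1}" using corr_eq[OF A] ab LM_Omega[OF A] M_eq1_iff[OF A] by simp
    qed
    show "{q \<in> Omega. snd q = 1} \<subseteq> corr ` {p \<in> frakA. snd p = -1}"
    proof
      fix q assume q: "q \<in> {q \<in> Omega. snd q = 1}"
      obtain l m where lm: "q = (l, m)" "m = 1" "l \<ge> 1" using q by (cases q) (auto simp: Omega_def)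
      obtain a b where ab: "inA a b" "LL a b = l" "MM a b = m" using surj_all[of l m] lm by auto
      have "b = -1" using M_eq1_iff[OF ab(1)] ab lm by auto
      then have "(a, b) \<in> {p \<in> frakA. snd p = -1}" using ab(1) by (auto simp: inA_iff)
      moreover have "q = corr (a, b)" using corr_eq[OF ab(1)] ab lm by simp
      ultimately show "q \<in> corr ` {p \<in> frakA. snd p = -1}" by blast
    qed
  qed
  show "corr (1, -1) = (1, 1)"
  proof -
    have A: "inA 1 (-1)" by (simp add: inA_def)
    have "LL 1 (-1) = 1" using LL1[of "-1"] by simp
    moreover have "MM 1 (-1) = 1" using M_eq1_iff[OF A] by simp
    ultimately show ?thesis using corr_eq[OF A] by simp
  qed
qed



end
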